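(* Let $\mathcal{N}$ be a chemical reaction network. The following are equivalent: (i) $\mathcal{N}$ is injective; (ii) for every rate vector $\kappa\in\mathbb{R}_+^{\mathcal{R}}$ and all distinct $a,b\in\overline{\mathbb{R}}_+^n$ such that $\mathcal{Y}_a\cap\mathcal{Y}_b=\emptyset$ and $a-b\in\Gamma$, one has $f_\kappa(a)\neq f_\kappa(b)$. In particular, if $b\in\mathbb{R}^n_+$, then $\mathcal{Y}_a\cap\mathcal{Y}_b=\emptyset$ holds for every $a\in\overline{\mathbb{R}}^n_+$.
   Context: A chemical reaction network $\mathcal{N}=(\mathcal{S},\mathcal{C},\mathcal{R})$ consists of a finite set of species $\mathcal{S}=\{S_1,\dots,S_n\}$, a finite set of complexes $\mathcal{C}\subset\mathbb{Z}_{\ge 0}^n$ (species $S_i$ identified with the $i$-th standard basis vector), and a finite set of reactions $\mathcal{R}\subset\mathcal{C}\times\mathcal{C}$, written $y\to y'$ ($y$ the reactant complex), with $y\ne y'$. $\mathbb{R}_+$ denotes the positive reals and $\overline{\mathbb{R}}_+$ the nonnegative reals. A rate vector is $\kappa=(k_{y\to y'})\in\mathbb{R}_+^{\mathcal{R}}$; the mass-action species formation rate function is $f_\kappa(c)=\sum_{y\to y'\in\mathcal{R}}k_{y\to y'}c^y(y'-y)$, $c^y=\prod_i c_i^{y_i}$. The stoichiometric subspace is $\Gamma=\mathrm{span}\{y'-y:y\to y'\in\mathcal{R}\}$. The network is injective if for every rate vector $\kappa\in\mathbb{R}_+^{\mathcal{R}}$ and all distinct $a,b\in\mathbb{R}^n_+$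 with $a-b\in\Gamma$ one has $f_\kappa(a)\ne f_\kappa(b)$. For $a\in\overline{\mathbb{R}}^n_+$ let $I_a=\{i: a_i=0\}$ and $\mathcal{Y}_a=\{y : y\to y'\in\mathcal{R}\text{ for some }y',\ I_a\cap\mathrm{supp}(y)\ne\emptyset\}$, where $\mathrm{supp}(y)=\{i:y_i\ne 0\}$. *)

theory Defs
  imports "HOL-Analysis.Analysis"
begin

text \<open>Species are indexed by a finite type 's (n = CARD('s)).\<close>

type_synonym 's complex = "'s \<Rightarrow> nat"
type_synonym 's reaction = "'s complex \<times> 's complex"

definition reaction_network :: "'s reaction set \<Rightarrow> bool" where
  "reaction_network R \<longleftrightarrow> finite R \<and> (\<forall>(y, y') \<in> R. y \<noteq> y')"

definition cvec :: "'s complex \<Rightarrow> real ^ 's::finite" where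
  "cvec y = (\<chi> i. real (y i))"

definition monom :: "real ^ 's::finite \<Rightarrow> 's complex \<Rightarrow> real" where
  "monom c y = (\<Prod>i\<in>UNIV. (c $ i) ^ (y i))"

definition rate_fun :: "'s reaction set \<Rightarrow> ('s reaction \<Rightarrow> real) \<Rightarrow> real ^ 's::finite \<Rightarrow> real ^ 's" where
  "rate_fun R \<kappa> c = (\<Sum>r\<in>R. (\<kappa> r * monom c (fst r)) *\<^sub>R (cvec (snd r) - cvec (fst r)))"

definition stoich_subspace :: "'s reaction set \<Rightarrow> (real ^ 's::finite) set" where
  "stoich_subspace R = span ((\<lambda>r. cvec (snd r) - cvec (fst r)) ` R)"

definition rate_vector :: "'s reaction set \<Rightarrow> ('s reaction \<Rightarrow> real) \<Rightarrow> bool" where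
  "rate_vector R \<kappa> \<longleftrightarrow> (\<forall>r\<in>R. \<kappa> r > 0)"

definition positive_vec :: "real ^ 's::finite \<Rightarrow> bool" where
  "positive_vec a \<longleftrightarrow> (\<forall>i. a $ i > 0)"

definition nonneg_vec :: "real ^ 's::finite \<Rightarrow> bool" where
  "nonneg_vec a \<longleftrightarrow> (\<forall>i. a $ i \<ge> 0)"

definition injective_network :: "'s::finite reaction set \<Rightarrow> bool" where
  "injective_network R \<longleftrightarrow>
     (\<forall>\<kappa>. rate_vector R \<kappa> \<longrightarrow>
        (\<forall>a b. positive_vec a \<and> positive_vec b \<and> a \<noteq> b \<and> a - b \<in> stoich_subspace R
               \<longrightarrow> rate_fun R \<kappa> a \<noteq> rate_fun R \<kappa> b))"

definition zero_set :: "real ^ 's::finite \<Rightarrow> 's set" where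
  "zero_set a = {i. a $ i = 0}"

definition Ycal :: "'s::finite reaction set \<Rightarrow> real ^ 's \<Rightarrow> 's complex set" where
  "Ycal R a = {y. (\<exists>y'. (y, y') \<in> R) \<and> zero_set a \<inter> {i. y i \<noteq> 0} \<noteq> {}}"

end

theory Submission
  imports Defs
begin

lemma monom_zero_iff: "monom c y = 0 \<longleftrightarrow> (\<exists>i. c $ i = 0 \<and> y i \<noteq> 0)"
  unfolding monom_def by (auto simp: prod_zero_iff)

lemma monom_tendsto:
  "((\<lambda>e. monom (a + e *\<^sub>R d) y) \<longlongrightarrow> monom a y) (at_right (0::real))"
proof -
  have "((\<lambda>e. (\<Prod>i\<in>UNIV. ((a + e *\<^sub>R d) $ i) ^ (y i))) \<longlongrightarrow> (\<Prod>i\<in>UNIV. (a $ i) ^ (y i))) (at_right (0::real))"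
  proof (intro tendsto_prod tendsto_power)
    fix i
    have "((\<lambda>e. a $ i + e * d $ i) \<longlongrightarrow> a $ i + 0 * d $ i) (at_right (0::real))"
      by (intro tendsto_intros)
    then show "((\<lambda>e. (a + e *\<^sub>R d) $ i) \<longlongrightarrow> a $ i) (at_right 0)" by simp
  qed
  then show ?thesis unfolding monom_def .
qed

lemma rate_fun_diff:
  "finite R \<Longrightarrow> rate_fun R \<kappa> a - rate_fun R \<kappa> b =
    (\<Sum>r\<in>R. (\<kappa> r * (monom a (fst r) - monom b (fst r))) *\<^sub>R (cvec (snd r) - cvec (fst r)))"
  unfolding rate_fun_def by (simp add: sum_subtractf[symmetric] algebra_simps)

lemma key:
  fixes R :: "'s::finite reaction set"
  assumes fin: "finite R" and inj: "injective_network R" and kap: "rate_vector R \<kappa>"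
    and na: "nonneg_vec a" and nb: "nonneg_vec b" and ab: "a \<noteq> b"
    and Y: "Ycal R a \<inter> Ycal R b = {}" and G: "a - b \<in> stoich_subspace R"
    and eq: "rate_fun R \<kappa> a = rate_fun R \<kappa> b"
  shows False
proof -
  define d :: "real ^ 's" where "d = (\<chi> i. if a $ i = 0 \<or> b $ i = 0 then 1 else 0)"
  define A :: "'s reaction \<Rightarrow> real" where "A = (\<lambda>r. monom a (fst r) - monom b (fst r))"
  define A' :: "real \<Rightarrow> 's reaction \<Rightarrow> real" where "A' = (\<lambda>e r. monom (a + e *\<^sub>R d) (fst r) - monom (b + e *\<^sub>R d) (fst r))"
  have ev: "\<forall>\<^sub>F e in at_right (0::real). \<forall>r\<in>R. (A r \<noteq> 0 \<longrightarrow> A' e r * A r > 0)"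
  proof (rule eventually_ball_finite[OF fin], rule ballI)
    fix r assume "r \<in> R"
    show "\<forall>\<^sub>F e in at_right 0. A r \<noteq> 0 \<longrightarrow> A' e r * A r > 0"
    proof (cases "A r = 0")
      case True then show ?thesis by simp
    next
      case False
      have "((\<lambda>e. A' e r * A r) \<longlongrightarrow> A r * A r) (at_right 0)"
        unfolding A'_def A_def by (intro tendsto_intros monom_tendsto)
      moreover have "A r * A r > 0" using False by (auto simp: zero_less_mult_iff linorder_neq_iff)
      ultimately have "\<forall>\<^sub>F e in at_right 0. A' e r * A r > 0"
        by (rule order_tendstoD)
      then show ?thesis by (auto elim: eventually_mono)
    qed
  qed
  have "\<forall>\<^sub>F e in at_right (0::real). e > 0" by (simp add: eventually_at_right_less)
  with ev have "\<forall>\<^sub>F e in at_right (0::real). e > 0 \<and> (\<forall>r\<in>R. (A r \<noteq> 0 \<longrightarrow> A' e r * A r > 0))"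
    by (rule eventually_conj[rotated])
  then obtain e where e: "e > 0" and he: "\<forall>r\<in>R. (A r \<noteq> 0 \<longrightarrow> A' e r * A r > 0)"
    using eventually_happens[of _ "at_right (0::real)"] by auto
  define a' where "a' = a + e *\<^sub>R d"
  define b' where "b' = b + e *\<^sub>R d"
  have pa: "positive_vec a'"
    unfolding positive_vec_def a'_def d_def using na e
    by (auto simp: nonneg_vec_def) (smt (verit))+
  have pb: "positive_vec b'"
    unfolding positive_vec_def b'_def d_def using nb e
    by (auto simp: nonneg_vec_def) (smt (verit))+
  have dd: "a' - b' = a - b" unfolding a'_def b'_def by simp
  have ne: "a' \<noteq> b'" using dd ab by (metis eq_iff_diff_eq_0)
  define \<kappa>' :: "'s reaction \<Rightarrow> real" where "\<kappa>' = (\<lambda>r. if A r = 0 then \<kappa> r else \<kappa> r * A r / A' e r)"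
  have kap': "rate_vector R \<kappa>'"
    unfolding rate_vector_def \<kappa>'_def
  proof (intro ballI)
    fix r assume r: "r \<in> R"
    have "\<kappa> r > 0" using kap r by (auto simp: rate_vector_def)
    moreover have "A r \<noteq> 0 \<Longrightarrow> A r / A' e r > 0"
      using he r by (auto simp: zero_less_divide_iff zero_less_mult_iff)
    ultimately show "0 < (if A r = 0 then \<kappa> r else \<kappa> r * A r / A' e r)"
      by (auto simp: times_divide_eq_right[symmetric] simp del: times_divide_eq_right)
  qed
  have hterm: "\<kappa>' r * A' e r = \<kappa> r * A r" if r: "r \<in> R" for r
  proof (cases "A r = 0")
    case False
    then have "A' e r \<noteq> 0" using he r by auto
    then show ?thesis using False by (simp add: \<kappa>'_def)
  next
    case True
    obtain y y' where ry: "r = (y, y')" by (cases r)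
    have ya: "y \<notin> Ycal R a \<or> y \<notin> Ycal R b" using Y by blast
    have reac: "\<exists>y'. (y, y') \<in> R" using r ry by blast
    have nz: "\<forall>i. y i \<noteq> 0 \<longrightarrow> a $ i \<noteq> 0 \<and> b $ i \<noteq> 0"
    proof -
      have "monom a y \<noteq> 0 \<or> monom b y \<noteq> 0"
        using ya reac by (auto simp: Ycal_def zero_set_def monom_zero_iff)
      then have "monom a y \<noteq> 0 \<and> monom b y \<noteq> 0" using True ry by (auto simp: A_def)
      then show ?thesis by (auto simp: monom_zero_iff)
    qed
    have "monom (a + e *\<^sub>R d) y = monom a y" "monom (b + e *\<^sub>R d) y = monom b y"
    proof -
      have z: "\<And>i. a $ i = 0 \<or> b $ i = 0 \<Longrightarrow> y i = 0" using nz by blast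
      show "monom (a + e *\<^sub>R d) y = monom a y" unfolding monom_def
        by (rule prod.cong) (auto simp: d_def z)
      show "monom (b + e *\<^sub>R d) y = monom b y" unfolding monom_def
        by (rule prod.cong) (auto simp: d_def z)
    qed
    then have "A' e r = 0" using True ry by (simp add: A'_def A_def)
    then show ?thesis using True by simp
  qed
  have "rate_fun R \<kappa>' a' - rate_fun R \<kappa>' b' = rate_fun R \<kappa> a - rate_fun R \<kappa> b"
    unfolding rate_fun_diff[OF fin]
    using hterm by (auto intro!: sum.cong simp: A_def A'_def a'_def b'_def)
  then have "rate_fun R \<kappa>' a' = rate_fun R \<kappa>' b'" using eq by simp
  moreover have "a' - b' \<in> stoich_subspace R" using dd G by simp
  ultimately show False using inj kap' pa pb ne unfolding injective_network_def by blast
qed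

theorem proposition5p2:
  fixes R :: "'s::finite reaction set"
  assumes "reaction_network R"
  shows "(injective_network R \<longleftrightarrow>
           (\<forall>\<kappa>. rate_vector R \<kappa> \<longrightarrow>
              (\<forall>a b. nonneg_vec a \<and> nonneg_vec b \<and> a \<noteq> b \<and>
                     Ycal R a \<inter> Ycal R b = {} \<and> a - b \<in> stoich_subspace R
                     \<longrightarrow> rate_fun R \<kappa> a \<noteq> rate_fun R \<kappa> b)))
         \<and> (\<forall>a b. positive_vec b \<and> nonneg_vec a \<longrightarrow> Ycal R a \<inter> Ycal R b = {})"
proof -
  have fin: "finite R" using assms by (simp add: reaction_network_def)
  have Ypos: "Ycal R b = {}" if "positive_vec b" for b :: "real ^ 's"
    using that by (auto simp: Ycal_def zero_set_def positive_vec_def) (metis less_irrefl)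
  have pn: "nonneg_vec a" if "positive_vec a" for a :: "real ^ 's"
    using that by (auto simp: nonneg_vec_def positive_vec_def less_imp_le)
  show ?thesis
  proof (intro conjI iffI allI impI)
    fix \<kappa> a b
    assume "injective_network R" "rate_vector R \<kappa>"
      "nonneg_vec a \<and> nonneg_vec b \<and> a \<noteq> b \<and> Ycal R a \<inter> Ycal R b = {} \<and> a - b \<in> stoich_subspace R"
    then show "rate_fun R \<kappa> a \<noteq> rate_fun R \<kappa> b" using key[OF fin] by blast
  next
    assume H: "\<forall>\<kappa>. rate_vector R \<kappa> \<longrightarrow>
              (\<forall>a b. nonneg_vec a \<and> nonneg_vec b \<and> a \<noteq> b \<and>
                     Ycal R a \<inter> Ycal R b = {} \<and> a - b \<in> stoich_subspace R
                     \<longrightarrow> rate_fun R \<kappa> a \<noteq> rate_fun R \<kappa> b)"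
    show "injective_network R" unfolding injective_network_def
      using H Ypos pn by blast
  next
    fix a b :: "real ^ 's"
    assume "positive_vec b \<and> nonneg_vec a"
    then show "Ycal R a \<inter> Ycal R b = {}" using Ypos by blast
  qed
qed

end
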